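(* Let $\boldsymbol\zeta=(\mathbf z^{(\mathsf e,j)})_{(\mathsf e,j)\in\mathcal E\times[K]}$ be a restriction sequence for $\mathsf{DIHP}(G,n,\alpha,K)$ that is not cyclic, and let $V_1,\dots,V_t\subseteq\mathcal V\times[n]$ be the connected components of $H_{\boldsymbol\zeta}$ with at least two vertices. Then (1) $\mathbb E_x[g_{\boldsymbol\zeta}(x)]=1$ for $x$ uniform in $\mathbb Z_N^{\mathcal V\times[n]}$; and (2) for any $b\in\mathbb Z_N^{\mathcal V\times[n]}$, $\widehat{g_{\boldsymbol\zeta}}(b)\ne0$ only if $\mathrm{supp}(b)\subseteq\bigcup_{i\in[t]}V_i$ and $|\mathrm{supp}(b)\cap V_i|\ne1$ for every $i\in[t]$.
   Context: $N\ge2$, $\mathbb Z_N=\mathbb Z/N\mathbb Z$. $G=(\mathcal V,\mathcal E,N,(\mu_{\mathsf e}))$ is a distribution-labeled $k$-graph: finite set $\mathcal V$, finite multiset $\mathcal E$ of ordered $k$-tuples of distinct vertices, and one-wise independent distributions $\mu_{\mathsf e}$ on $\mathbb Z_N^k$ (each coordinate marginal uniform), with pmf $\mu_{\mathsf e}(\cdot)$. For $\mathsf e=(\mathsf v_1,\dots,\mathsf v_k)$, $\mathcal U_{\mathsf e}=(\{\mathsf v_1\}\times[n],\dots,\{\mathsf v_k\}\times[n])$ and $\prod\mathcal U_{\mathsf e}$ is the product of these sets. A restriction sequence is $\boldsymbol\zeta=(\mathbf z^{(\mathsf e,j)})_{(\mathsf e,j)\in\mathcal E\times[K]}$ where each $\mathbf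 z^{(\mathsf e,j)}$ is a map $\prod\mathcal U_{\mathsf e}\to\mathbb Z_N^k\cup\{\mathtt{nil}\}$ whose support $\{e:\mathbf z(e)\ne\mathtt{nil}\}$ is a matching (pairwise vertex-disjoint tuples) of size at most $\alpha n$. $H_{\boldsymbol\zeta}$ is the $k$-uniform hypergraph on $\mathcal V\times[n]$ with edge set $\bigcup\mathrm{supp}\mathbf z^{(\mathsf e,j)}$. $\boldsymbol\zeta$ is cyclic if the supports are not pairwise disjoint or some $\ell\ge1$ edges of $H_{\boldsymbol\zeta}$ together cover at most $\ell(k-1)$ vertices. For $e=(v_1,\dots,v_k)$, $x_{|e}=(x_{v_1},\dots,x_{v_k})$. $g_{\boldsymbol\zeta}(x)=\prod_{(\mathsf e,j)}\prod_{e\in\mathrm{supp}\mathbf z^{(\mathsf e,j)}}N^k\mu_{\mathsf e}(x_{|e}-\mathbf z^{(\mathsf e,j)}(e))$. Fourier: $\chi_b(x)=\exp(\frac{2\pi\mathrm i}N\sum_vb_vx_v)$, $\widehat g(b)=\mathbb E_x[g(x)\overline{\chi_b(x)}]$. *)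

theory Defs
  imports "HOL-Probability.Probability"
begin

text \<open>
Conventions.
 \<^item> Vertex set of G: a finite set V :: 'v set.
 \<^item> The multiset of edges of G is modelled by a finite index set E :: 'i set together with
   tup :: 'i => 'v list (the k-tuple of edge i); repeated tuples = multiplicities.
 \<^item> Z_N is modelled by {0..<N} :: nat set, with subtraction modulo N.
 \<^item> Z_N^k is modelled by lists of length k with entries < N; mu i is a pmf on such lists.
 \<^item> [n] = {1..n}, [K] = {1..K}. Vertices of the blown-up graph are pairs (v,a) in V x [n].
 \<^item> A restriction z i j maps a tuple t in prod U_(tup i) to Some value in Z_N^k or None (nil).
\<close>

definition ZN_vecs :: "nat \<Rightarrow> nat \<Rightarrow> nat list set" where
  "ZN_vecs N k = {xs. length xs = k \<and> (\<forall>a\<in>set xs. a < N)}"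

definition dlgraph :: "'v set \<Rightarrow> 'i set \<Rightarrow> ('i \<Rightarrow> 'v list) \<Rightarrow> nat \<Rightarrow> nat
    \<Rightarrow> ('i \<Rightarrow> nat list pmf) \<Rightarrow> bool" where
  "dlgraph V E tup k N mu \<longleftrightarrow> finite V \<and> finite E \<and> N \<ge> 2 \<and>
     (\<forall>i\<in>E. length (tup i) = k \<and> distinct (tup i) \<and> set (tup i) \<subseteq> V \<and>
        set_pmf (mu i) \<subseteq> ZN_vecs N k \<and>
        (\<forall>m<k. \<forall>a<N. measure_pmf.prob (mu i) {xs. xs ! m = a} = 1 / real N))"

definition prodU :: "'v list \<Rightarrow> nat \<Rightarrow> ('v \<times> nat) list set" where
  "prodU e n = {t. length t = length e \<and>
      (\<forall>m<length t. fst (t ! m) = e ! m \<and> snd (t ! m) \<in> {1..n})}"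

definition rsupp :: "'v list \<Rightarrow> nat \<Rightarrow> (('v \<times> nat) list \<Rightarrow> nat list option)
    \<Rightarrow> ('v \<times> nat) list set" where
  "rsupp e n z = {t \<in> prodU e n. z t \<noteq> None}"

definition restriction_seq ::
  "'i set \<Rightarrow> ('i \<Rightarrow> 'v list) \<Rightarrow> nat \<Rightarrow> nat \<Rightarrow> nat \<Rightarrow> real \<Rightarrow> nat
     \<Rightarrow> ('i \<Rightarrow> nat \<Rightarrow> ('v \<times> nat) list \<Rightarrow> nat list option) \<Rightarrow> bool" where
  "restriction_seq E tup k N n \<alpha> K z \<longleftrightarrow>
     (\<forall>i\<in>E. \<forall>j\<in>{1..K}.
        (\<forall>t\<in>rsupp (tup i) n (z i j). the (z i j t) \<in> ZN_vecs N k) \<and>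
        (\<forall>t\<in>rsupp (tup i) n (z i j). \<forall>t'\<in>rsupp (tup i) n (z i j).
            t \<noteq> t' \<longrightarrow> set t \<inter> set t' = {}) \<and>
        real (card (rsupp (tup i) n (z i j))) \<le> \<alpha> * real n)"

definition Hedges :: "'i set \<Rightarrow> ('i \<Rightarrow> 'v list) \<Rightarrow> nat \<Rightarrow> nat
    \<Rightarrow> ('i \<Rightarrow> nat \<Rightarrow> ('v \<times> nat) list \<Rightarrow> nat list option) \<Rightarrow> ('v \<times> nat) list set" where
  "Hedges E tup n K z = (\<Union>i\<in>E. \<Union>j\<in>{1..K}. rsupp (tup i) n (z i j))"

definition cyclic :: "'i set \<Rightarrow> ('i \<Rightarrow> 'v list) \<Rightarrow> nat \<Rightarrow> nat \<Rightarrow> nat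
    \<Rightarrow> ('i \<Rightarrow> nat \<Rightarrow> ('v \<times> nat) list \<Rightarrow> nat list option) \<Rightarrow> bool" where
  "cyclic E tup k n K z \<longleftrightarrow>
     (\<exists>i\<in>E. \<exists>j\<in>{1..K}. \<exists>i'\<in>E. \<exists>j'\<in>{1..K}. (i, j) \<noteq> (i', j') \<and>
         rsupp (tup i) n (z i j) \<inter> rsupp (tup i') n (z i' j') \<noteq> {}) \<or>
     (\<exists>F \<subseteq> Hedges E tup n K z. F \<noteq> {} \<and> finite F \<and>
         card (\<Union>t\<in>F. set t) \<le> card F * (k - 1))"

definition Hadj :: "'i set \<Rightarrow> ('i \<Rightarrow> 'v list) \<Rightarrow> nat \<Rightarrow> nat
    \<Rightarrow> ('i \<Rightarrow> nat \<Rightarrow> ('v \<times> nat) list \<Rightarrow> nat list option) \<Rightarrow> (('v \<times> nat) \<times> ('v \<times> nat)) set" where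
  "Hadj E tup n K z = {(u, w). \<exists>t\<in>Hedges E tup n K z. u \<in> set t \<and> w \<in> set t}"

definition Hcomponents :: "'v set \<Rightarrow> 'i set \<Rightarrow> ('i \<Rightarrow> 'v list) \<Rightarrow> nat \<Rightarrow> nat
    \<Rightarrow> ('i \<Rightarrow> nat \<Rightarrow> ('v \<times> nat) list \<Rightarrow> nat list option) \<Rightarrow> ('v \<times> nat) set set" where
  "Hcomponents V E tup n K z =
     {{w \<in> V \<times> {1..n}. (u, w) \<in> (Hadj E tup n K z)\<^sup>*} | u. u \<in> V \<times> {1..n}}"

definition vsub :: "nat \<Rightarrow> nat list \<Rightarrow> nat list \<Rightarrow> nat list" where
  "vsub N xs zs = map2 (\<lambda>a c. (a + N - c mod N) mod N) xs zs"

definition gzeta :: "'i set \<Rightarrow> ('i \<Rightarrow> 'v list) \<Rightarrow> nat \<Rightarrow> nat \<Rightarrow> ('i \<Rightarrow> nat list pmf)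
    \<Rightarrow> nat \<Rightarrow> nat \<Rightarrow> ('i \<Rightarrow> nat \<Rightarrow> ('v \<times> nat) list \<Rightarrow> nat list option)
    \<Rightarrow> ('v \<times> nat \<Rightarrow> nat) \<Rightarrow> real" where
  "gzeta E tup k N mu n K z x =
     (\<Prod>i\<in>E. \<Prod>j\<in>{1..K}. \<Prod>t\<in>rsupp (tup i) n (z i j).
        real N ^ k * pmf (mu i) (vsub N (map x t) (the (z i j t))))"

definition assignments :: "'v set \<Rightarrow> nat \<Rightarrow> nat \<Rightarrow> ('v \<times> nat \<Rightarrow> nat) set" where
  "assignments V n N = PiE (V \<times> {1..n}) (\<lambda>_. {0..<N})"

definition unif_expect :: "'v set \<Rightarrow> nat \<Rightarrow> nat \<Rightarrow> (('v \<times> nat \<Rightarrow> nat) \<Rightarrow> 'a::real_field) \<Rightarrow> 'a" where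
  "unif_expect V n N f = (\<Sum>x\<in>assignments V n N. f x) / of_nat (card (assignments V n N))"

definition character :: "'v set \<Rightarrow> nat \<Rightarrow> nat \<Rightarrow> ('v \<times> nat \<Rightarrow> nat) \<Rightarrow> ('v \<times> nat \<Rightarrow> nat) \<Rightarrow> complex" where
  "character V n N b x =
     exp (2 * of_real pi * \<i> / of_nat N * of_nat (\<Sum>v\<in>V \<times> {1..n}. b v * x v))"

definition fourier :: "'v set \<Rightarrow> nat \<Rightarrow> nat \<Rightarrow> (('v \<times> nat \<Rightarrow> nat) \<Rightarrow> real)
    \<Rightarrow> ('v \<times> nat \<Rightarrow> nat) \<Rightarrow> complex" where
  "fourier V n N g b = unif_expect V n N (\<lambda>x. complex_of_real (g x) * cnj (character V n N b x))"

definition fsupp :: "'v set \<Rightarrow> nat \<Rightarrow> ('v \<times> nat \<Rightarrow> nat) \<Rightarrow> ('v \<times> nat) set" where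
  "fsupp V n b = {u \<in> V \<times> {1..n}. b u \<noteq> 0}"

end

theory Submission
  imports Defs
begin


definition mrg :: "'d set \<Rightarrow> ('d \<Rightarrow> 'b) \<Rightarrow> ('d \<Rightarrow> 'b) \<Rightarrow> 'd \<Rightarrow> 'b" where
  "mrg P x0 y = (\<lambda>v. if v \<in> P then y v else x0 v)"

lemma mrg_out: "v \<notin> P \<Longrightarrow> mrg P x0 y v = x0 v"
  by (simp add: mrg_def)

lemma split_sum:
  fixes F :: "('d \<Rightarrow> 'b) \<Rightarrow> 'a::comm_monoid_add"
  assumes "P \<subseteq> D"
  shows "(\<Sum>x\<in>PiE D B. F x) = (\<Sum>x0\<in>PiE (D - P) B. \<Sum>y\<in>PiE P B. F (mrg P x0 y))"
proof -
  have "(\<Sum>x0\<in>PiE (D - P) B. \<Sum>y\<in>PiE P B. F (mrg P x0 y))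
      = (\<Sum>p\<in>PiE (D - P) B \<times> PiE P B. F (mrg P (fst p) (snd p)))"
    by (simp add: sum.cartesian_product split_beta)
  also have "\<dots> = (\<Sum>x\<in>PiE D B. F x)"
  proof (rule sum.reindex_bij_witness[where i = "\<lambda>x. (restrict x (D - P), restrict x P)"
        and j = "\<lambda>p. mrg P (fst p) (snd p)"])
    fix x assume x: "x \<in> PiE D B"
    show "mrg P (fst (restrict x (D - P), restrict x P)) (snd (restrict x (D - P), restrict x P)) = x"
      using x assms by (auto simp: mrg_def PiE_def extensional_def fun_eq_iff)
    show "(restrict x (D - P), restrict x P) \<in> PiE (D - P) B \<times> PiE P B"
      using x assms by (auto simp: PiE_iff)
  next
    fix p assume p: "p \<in> PiE (D - P) B \<times> PiE P B"
    then show "(restrict (mrg P (fst p) (snd p)) (D - P), restrict (mrg P (fst p) (snd p)) P) = p"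
      by (cases p) (auto simp: mrg_def PiE_def extensional_def fun_eq_iff)
    show "mrg P (fst p) (snd p) \<in> PiE D B"
      using p assms by (cases p) (auto simp: mrg_def PiE_def extensional_def Pi_def)
  qed simp
  finally show ?thesis ..
qed

lemma sum_PiE_single:
  fixes f :: "'b \<Rightarrow> 'a::comm_monoid_add"
  shows "(\<Sum>x\<in>PiE {u} B. f (x u)) = (\<Sum>a\<in>B u. f a)"
proof (rule sum.reindex_bij_witness[where i = "\<lambda>a. (\<lambda>_. undefined)(u := a)" and j = "\<lambda>x. x u"])
qed (auto simp: PiE_def extensional_def fun_eq_iff)

lemma vec_sum:
  fixes F :: "nat list \<Rightarrow> 'a::comm_monoid_add"
  assumes dT: "distinct T" and lT: "length T = k" and m: "m < k" and x0: "x0 (T!m) < N"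
  shows "(\<Sum>y\<in>PiE (set T - {T!m}) (\<lambda>_. {0..<N}). F (map (mrg (set T - {T!m}) x0 y) T))
       = (\<Sum>v\<in>{v\<in>ZN_vecs N k. v!m = x0 (T!m)}. F v)"
proof (rule sum.reindex_bij_witness[where
      i = "\<lambda>v s. if s \<in> set T - {T!m} then the (map_of (zip T v) s) else undefined"
      and j = "\<lambda>y. map (mrg (set T - {T!m}) x0 y) T"])
  fix y assume y: "y \<in> PiE (set T - {T!m}) (\<lambda>_. {0..<N})"
  show "(\<lambda>s. if s \<in> set T - {T ! m} then the (map_of (zip T (map (mrg (set T - {T ! m}) x0 y) T)) s) else undefined) = y"
  proof
    fix s show "(if s \<in> set T - {T ! m} then the (map_of (zip T (map (mrg (set T - {T ! m}) x0 y) T)) s) else undefined) = y s"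
    proof (cases "s \<in> set T - {T ! m}")
      case True
      then obtain i where i: "i < length T" "T ! i = s" by (auto simp: in_set_conv_nth)
      have "map_of (zip T (map (mrg (set T - {T ! m}) x0 y) T)) (T!i) = Some (map (mrg (set T - {T ! m}) x0 y) T ! i)"
        by (rule map_of_zip_nth) (use i dT in auto)
      then show ?thesis using True i by (simp add: mrg_def)
    next
      case False then show ?thesis using y by (auto simp: PiE_def extensional_def)
    qed
  qed
  show "map (mrg (set T - {T ! m}) x0 y) T \<in> {v \<in> ZN_vecs N k. v ! m = x0 (T ! m)}"
    using y x0 lT m by (auto simp: ZN_vecs_def mrg_def PiE_iff)
next
  fix v assume v: "v \<in> {v \<in> ZN_vecs N k. v ! m = x0 (T ! m)}"
  then have lv: "length v = k" and vN: "\<forall>a\<in>set v. a < N" and vm: "v ! m = x0 (T!m)"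
    by (auto simp: ZN_vecs_def)
  have mo: "\<And>i. i < k \<Longrightarrow> map_of (zip T v) (T!i) = Some (v ! i)"
    by (rule map_of_zip_nth) (use lT lv dT in auto)
  show "map (mrg (set T - {T ! m}) x0 (\<lambda>s. if s \<in> set T - {T ! m} then the (map_of (zip T v) s) else undefined)) T = v"
  proof (rule nth_equalityI)
    show "length (map (mrg (set T - {T ! m}) x0 (\<lambda>s. if s \<in> set T - {T ! m} then the (map_of (zip T v) s) else undefined)) T) = length v"
      using lT lv by simp
    fix i assume "i < length (map (mrg (set T - {T ! m}) x0 (\<lambda>s. if s \<in> set T - {T ! m} then the (map_of (zip T v) s) else undefined)) T)"
    then have i: "i < k" using lT by simp
    show "map (mrg (set T - {T ! m}) x0 (\<lambda>s. if s \<in> set T - {T ! m} then the (map_of (zip T v) s) else undefined)) T ! i = v ! i"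
    proof (cases "i = m")
      case True then show ?thesis using vm lT i by (simp add: mrg_def)
    next
      case False
      then have "T ! i \<noteq> T ! m" using dT lT i m by (simp add: nth_eq_iff_index_eq)
      then show ?thesis using i lT mo[OF i] by (simp add: mrg_def)
    qed
  qed
  show "(\<lambda>s. if s \<in> set T - {T ! m} then the (map_of (zip T v) s) else undefined) \<in> PiE (set T - {T ! m}) (\<lambda>_. {0..<N})"
  proof (rule PiE_I)
    fix s assume "s \<in> set T - {T ! m}"
    then obtain i where i: "i < k" "T ! i = s" "s \<in> set T - {T ! m}" using lT by (auto simp: in_set_conv_nth)
    then show "(if s \<in> set T - {T ! m} then the (map_of (zip T v) s) else undefined) \<in> {0..<N}"
      using mo[OF i(1)] vN lv i by (auto simp: nth_mem)
  qed auto
qed simp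

lemma leaf_exists:
  fixes tl :: "'j \<Rightarrow> 'd list"
  assumes fI: "finite I" and dl: "\<forall>\<iota>\<in>I. distinct (tl \<iota>) \<and> length (tl \<iota>) = k"
    and forest: "card I * (k - 1) < card (\<Union>\<iota>\<in>I. set (tl \<iota>))"
  shows "\<exists>t\<in>I. card (set (tl t) \<inter> (\<Union>\<iota>\<in>I - {t}. set (tl \<iota>))) \<le> 1"
proof (rule ccontr)
  assume "\<not> ?thesis"
  then have two: "\<forall>t\<in>I. 2 \<le> card (set (tl t) \<inter> (\<Union>\<iota>\<in>I - {t}. set (tl \<iota>)))" by auto
  define W where "W = (\<Union>\<iota>\<in>I. set (tl \<iota>))"
  define deg where "deg v = (\<Sum>\<iota>\<in>I. if v \<in> set (tl \<iota>) then 1 else 0 :: nat)" for v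
  have fW: "finite W" unfolding W_def using fI by auto
  have cardsub: "(\<Sum>v\<in>W. if v \<in> set (tl \<iota>) \<and> Q v then 1 else 0 :: nat) = card {v\<in>set (tl \<iota>). Q v}"
    if "\<iota> \<in> I" for \<iota> Q
  proof -
    have "(\<Sum>v\<in>W. if v \<in> set (tl \<iota>) \<and> Q v then 1 else 0 :: nat) = (\<Sum>v\<in>{v\<in>W. v \<in> set (tl \<iota>) \<and> Q v}. 1)"
      using fW by (simp add: sum.inter_filter[symmetric])
    also have "{v\<in>W. v \<in> set (tl \<iota>) \<and> Q v} = {v\<in>set (tl \<iota>). Q v}" using that by (auto simp: W_def)
    finally show ?thesis by simp
  qed
  have sumdeg: "(\<Sum>v\<in>W. deg v) = card I * k"
  proof -
    have "(\<Sum>v\<in>W. deg v) = (\<Sum>\<iota>\<in>I. \<Sum>v\<in>W. if v \<in> set (tl \<iota>) \<and> True then 1 else 0)"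
      unfolding deg_def by (simp add: sum.swap[of _ W])
    also have "\<dots> = (\<Sum>\<iota>\<in>I. card {v\<in>set (tl \<iota>). True})"
      using cardsub[where Q = "\<lambda>_. True"] by (intro sum.cong) auto
    also have "\<dots> = (\<Sum>\<iota>\<in>I. k)"
      by (rule sum.cong) (use dl distinct_card in fastforce)+
    finally show ?thesis by simp
  qed
  have sh: "set (tl t) \<inter> (\<Union>\<iota>\<in>I - {t}. set (tl \<iota>)) = {v\<in>set (tl t). 2 \<le> deg v}" if t: "t \<in> I" for t
  proof -
    have d1: "deg v = 1 + (\<Sum>\<iota>\<in>I - {t}. if v \<in> set (tl \<iota>) then 1 else 0)" if "v \<in> set (tl t)" for v
      unfolding deg_def by (subst sum.remove[OF fI t]) (use that in simp)
    have ne: "((\<Sum>\<iota>\<in>I - {t}. if v \<in> set (tl \<iota>) then 1 else 0 :: nat) \<noteq> 0) = (\<exists>\<iota>\<in>I - {t}. v \<in> set (tl \<iota>))" for v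
      using fI by (simp add: sum_eq_0_iff)
    show ?thesis
    proof (rule set_eqI)
      fix v show "v \<in> set (tl t) \<inter> (\<Union>\<iota>\<in>I - {t}. set (tl \<iota>)) \<longleftrightarrow> v \<in> {v\<in>set (tl t). 2 \<le> deg v}"
      proof (cases "v \<in> set (tl t)")
        case True
        have "(\<exists>\<iota>\<in>I - {t}. v \<in> set (tl \<iota>)) \<longleftrightarrow> 2 \<le> deg v"
          unfolding d1[OF True] ne[of v, symmetric] by linarith
        then show ?thesis using True by blast
      qed simp
    qed
  qed
  have "(\<Sum>v\<in>W. if 2 \<le> deg v then deg v else 0) = (\<Sum>v\<in>W. \<Sum>\<iota>\<in>I. if v \<in> set (tl \<iota>) \<and> 2 \<le> deg v then 1 else 0)"
    by (rule sum.cong) (auto simp: deg_def intro: sum.cong)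
  also have "\<dots> = (\<Sum>\<iota>\<in>I. card {v\<in>set (tl \<iota>). 2 \<le> deg v})"
    by (subst sum.swap) (rule sum.cong, auto simp: cardsub)
  also have "\<dots> \<ge> (\<Sum>\<iota>\<in>I. 2)"
    by (rule sum_mono) (use two sh in auto)
  finally have A: "2 * card I \<le> (\<Sum>v\<in>W. if 2 \<le> deg v then deg v else 0)" by simp
  have deg1: "1 \<le> deg v" if vW: "v \<in> W" for v
  proof -
    obtain \<iota> where "\<iota> \<in> I" "v \<in> set (tl \<iota>)" using vW by (auto simp: W_def)
    then have "(if v \<in> set (tl \<iota>) then 1 else 0) \<le> deg v"
      unfolding deg_def by (intro member_le_sum) (use fI in auto)
    then show ?thesis using \<open>v \<in> set (tl \<iota>)\<close> by simp
  qed
  have "(\<Sum>v\<in>W. 2 + (if 2 \<le> deg v then deg v else 0)) \<le> (\<Sum>v\<in>W. 2 * deg v)"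
    by (rule sum_mono) (use deg1 in force)
  moreover have "(\<Sum>v\<in>W. 2 + (if 2 \<le> deg v then deg v else 0)) = (\<Sum>v\<in>W. 2) + (\<Sum>v\<in>W. (if 2 \<le> deg v then deg v else 0))"
    by (rule sum.distrib)
  moreover have "(\<Sum>v\<in>W. 2 * deg v) = 2 * (\<Sum>v\<in>W. deg v)" by (rule sum_distrib_left[symmetric])
  ultimately have "2 * card W + (\<Sum>v\<in>W. if 2 \<le> deg v then deg v else 0) \<le> 2 * (card I * k)"
    by (simp only: sumdeg sum_constant) (simp add: mult.commute)
  with A have "card W + card I \<le> card I * k" by linarith
  then have "card W \<le> card I * (k - 1)" by (simp add: diff_mult_distrib2)
  with forest show False by (simp add: W_def)
qed

definition onewise :: "(nat list \<Rightarrow> 'a::comm_semiring_1) \<Rightarrow> nat \<Rightarrow> nat \<Rightarrow> bool" where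
  "onewise f N k \<longleftrightarrow> (\<forall>m<k. \<forall>a<N. (\<Sum>v\<in>{v\<in>ZN_vecs N k. v!m = a}. f v) = of_nat N ^ (k - 1))"

lemma finite_ZN: "finite (ZN_vecs N k)"
proof -
  have "ZN_vecs N k \<subseteq> {xs. set xs \<subseteq> {..<N} \<and> length xs = k}" by (auto simp: ZN_vecs_def)
  then show ?thesis by (rule finite_subset) (rule finite_lists_length_eq, simp)
qed

lemma card_set_minus_nth:
  assumes "distinct T" "length T = k" "m < k"
  shows "card (set T - {T!m}) = k - 1"
  using assms by (simp add: distinct_card)

lemma caseA:
  fixes H :: "('d \<Rightarrow> nat) \<Rightarrow> 'a::comm_semiring_1"
  assumes fD: "finite D" and P: "P = set T - {T!m}" and TD: "set T \<subseteq> D" and dT: "distinct T"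
    and lT: "length T = k" and m: "m < k" and ow: "onewise f N k"
    and Hind: "\<And>x0 y. H (mrg P x0 y) = H x0"
  shows "(\<Sum>x\<in>PiE D (\<lambda>_. {0..<N}). H x * f (map x T)) = (\<Sum>x\<in>PiE D (\<lambda>_. {0..<N}). H x)"
proof -
  have PD: "P \<subseteq> D" using P TD by auto
  have x0N: "x0 (T!m) < N" if "x0 \<in> PiE (D - P) (\<lambda>_. {0..<N})" for x0
  proof -
    have "T!m \<in> D - P" using P TD m lT by auto
    then show ?thesis using that by (auto simp: PiE_iff)
  qed
  have "(\<Sum>x\<in>PiE D (\<lambda>_. {0..<N}). H x * f (map x T))
     = (\<Sum>x0\<in>PiE (D - P) (\<lambda>_. {0..<N}). \<Sum>y\<in>PiE P (\<lambda>_. {0..<N}). H x0 * f (map (mrg P x0 y) T))"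
    by (subst split_sum[OF PD]) (simp add: Hind)
  also have "\<dots> = (\<Sum>x0\<in>PiE (D - P) (\<lambda>_. {0..<N}). H x0 * of_nat N ^ (k - 1))"
  proof (rule sum.cong[OF refl])
    fix x0 assume x0: "x0 \<in> PiE (D - P) (\<lambda>_. {0..<N})"
    have "(\<Sum>y\<in>PiE P (\<lambda>_. {0..<N}). f (map (mrg P x0 y) T)) = (\<Sum>v\<in>{v\<in>ZN_vecs N k. v!m = x0 (T!m)}. f v)"
      unfolding P by (rule vec_sum[where ?x0.0=x0 and F=f, OF dT lT m x0N[OF x0]])
    also have "\<dots> = of_nat N ^ (k - 1)" using ow m x0N[OF x0] by (simp add: onewise_def)
    finally show "(\<Sum>y\<in>PiE P (\<lambda>_. {0..<N}). H x0 * f (map (mrg P x0 y) T)) = H x0 * of_nat N ^ (k - 1)"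
      by (simp add: sum_distrib_left[symmetric])
  qed
  also have "\<dots> = (\<Sum>x0\<in>PiE (D - P) (\<lambda>_. {0..<N}). \<Sum>y\<in>PiE P (\<lambda>_. {0..<N}). H (mrg P x0 y))"
  proof (rule sum.cong[OF refl])
    fix x0
    have "card (PiE P (\<lambda>_. {0..<N})) = N ^ (k - 1)"
      using card_set_minus_nth[OF dT lT m] P by (simp add: card_PiE)
    then show "H x0 * of_nat N ^ (k - 1) = (\<Sum>y\<in>PiE P (\<lambda>_. {0..<N}). H (mrg P x0 y))"
      by (simp add: Hind mult.commute)
  qed
  also have "\<dots> = (\<Sum>x\<in>PiE D (\<lambda>_. {0..<N}). H x)"
    by (rule split_sum[OF PD, symmetric])
  finally show ?thesis .
qed

lemma caseB:
  fixes H :: "('d \<Rightarrow> nat) \<Rightarrow> 'a::comm_semiring_1"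
  assumes fD: "finite D" and P: "P = set T - {T!m}" and TD: "set T \<subseteq> D" and dT: "distinct T"
    and lT: "length T = k" and m: "m < k" and mu: "mu < k" "mu \<noteq> m"
    and Hind: "\<And>x0 y. H (mrg P x0 y) = H x0"
  shows "of_nat N ^ (k - 1) * (\<Sum>x\<in>PiE D (\<lambda>_. {0..<N}). h (x (T!mu)) * (f (map x T) * H x))
       = (\<Sum>x\<in>PiE D (\<lambda>_. {0..<N}). H x * (\<Sum>v\<in>{v\<in>ZN_vecs N k. v!m = x (T!m)}. h (v!mu) * f v))"
proof -
  define psi where "psi c = (\<Sum>v\<in>{v\<in>ZN_vecs N k. v!m = c}. h (v!mu) * f v)" for c
  have PD: "P \<subseteq> D" using P TD by auto
  have x0N: "x0 (T!m) < N" if "x0 \<in> PiE (D - P) (\<lambda>_. {0..<N})" for x0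
  proof -
    have "T!m \<in> D - P" using P TD m lT by auto
    then show ?thesis using that by (auto simp: PiE_iff)
  qed
  have muP: "T!mu \<in> P" using P mu lT dT m by (auto simp: nth_eq_iff_index_eq)
  have mP: "T!m \<notin> P" using P by auto
  have "(\<Sum>x\<in>PiE D (\<lambda>_. {0..<N}). h (x (T!mu)) * (f (map x T) * H x))
     = (\<Sum>x0\<in>PiE (D - P) (\<lambda>_. {0..<N}). \<Sum>y\<in>PiE P (\<lambda>_. {0..<N}).
          H x0 * (h ((map (mrg P x0 y) T) ! mu) * f (map (mrg P x0 y) T)))"
    by (subst split_sum[OF PD]) (simp add: Hind mu lT ac_simps)
  also have "\<dots> = (\<Sum>x0\<in>PiE (D - P) (\<lambda>_. {0..<N}). H x0 * psi (x0 (T!m)))"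
  proof (rule sum.cong[OF refl])
    fix x0 assume x0: "x0 \<in> PiE (D - P) (\<lambda>_. {0..<N})"
    have "(\<Sum>y\<in>PiE P (\<lambda>_. {0..<N}). h ((map (mrg P x0 y) T) ! mu) * f (map (mrg P x0 y) T))
       = psi (x0 (T!m))"
      unfolding P psi_def by (rule vec_sum[where ?x0.0=x0 and F="\<lambda>v. h (v!mu) * f v", OF dT lT m x0N[OF x0]])
    then show "(\<Sum>y\<in>PiE P (\<lambda>_. {0..<N}). H x0 * (h ((map (mrg P x0 y) T) ! mu) * f (map (mrg P x0 y) T)))
       = H x0 * psi (x0 (T!m))"
      by (simp add: sum_distrib_left[symmetric])
  qed
  finally have L: "(\<Sum>x\<in>PiE D (\<lambda>_. {0..<N}). h (x (T!mu)) * (f (map x T) * H x))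
     = (\<Sum>x0\<in>PiE (D - P) (\<lambda>_. {0..<N}). H x0 * psi (x0 (T!m)))" .
  have cP: "card (PiE P (\<lambda>_. {0..<N})) = N ^ (k - 1)"
    using card_set_minus_nth[OF dT lT m] P by (simp add: card_PiE)
  have "(\<Sum>x\<in>PiE D (\<lambda>_. {0..<N}). H x * psi (x (T!m)))
     = (\<Sum>x0\<in>PiE (D - P) (\<lambda>_. {0..<N}). \<Sum>y\<in>PiE P (\<lambda>_. {0..<N}). H x0 * psi (x0 (T!m)))"
    by (subst split_sum[OF PD]) (simp add: Hind mrg_out mP)
  also have "\<dots> = of_nat N ^ (k - 1) * (\<Sum>x0\<in>PiE (D - P) (\<lambda>_. {0..<N}). H x0 * psi (x0 (T!m)))"
    by (simp add: cP sum_distrib_left mult.commute)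
  finally show ?thesis using L by (simp add: psi_def)
qed

lemma psi_sum:
  fixes h :: "nat \<Rightarrow> 'a::comm_semiring_1"
  assumes ow: "onewise f N k" and m: "m < k" and mu: "mu < k"
  shows "(\<Sum>c<N. \<Sum>v\<in>{v\<in>ZN_vecs N k. v!m = c}. h (v!mu) * f v) = of_nat N ^ (k - 1) * (\<Sum>a<N. h a)"
proof -
  have img: "(\<lambda>v. v ! i) ` ZN_vecs N k \<subseteq> {..<N}" if "i < k" for i
    using that by (auto simp: ZN_vecs_def)
  have "(\<Sum>c<N. \<Sum>v\<in>{v\<in>ZN_vecs N k. v!m = c}. h (v!mu) * f v) = (\<Sum>v\<in>ZN_vecs N k. h (v!mu) * f v)"
    by (rule sum.group[OF finite_ZN finite_lessThan img[OF m]])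
  also have "\<dots> = (\<Sum>a<N. \<Sum>v\<in>{v\<in>ZN_vecs N k. v!mu = a}. h (v!mu) * f v)"
    by (rule sum.group[OF finite_ZN finite_lessThan img[OF mu], symmetric])
  also have "\<dots> = (\<Sum>a<N. h a * of_nat N ^ (k - 1))"
  proof (rule sum.cong[OF refl])
    fix a assume "a \<in> {..<N}"
    then have "(\<Sum>v\<in>{v\<in>ZN_vecs N k. v!mu = a}. f v) = of_nat N ^ (k - 1)"
      using ow mu by (simp add: onewise_def)
    moreover have "(\<Sum>v\<in>{v\<in>ZN_vecs N k. v!mu = a}. h (v!mu) * f v) = (\<Sum>v\<in>{v\<in>ZN_vecs N k. v!mu = a}. h a * f v)"
      by (rule sum.cong) auto
    ultimately show "(\<Sum>v\<in>{v\<in>ZN_vecs N k. v!mu = a}. h (v!mu) * f v) = h a * of_nat N ^ (k - 1)"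
      by (simp add: sum_distrib_left[symmetric])
  qed
  finally show ?thesis by (simp add: sum_distrib_right mult.commute)
qed

definition forest_sys :: "'d set \<Rightarrow> 'j set \<Rightarrow> ('j \<Rightarrow> 'd list) \<Rightarrow> ('j \<Rightarrow> nat list \<Rightarrow> 'a::field_char_0)
    \<Rightarrow> nat \<Rightarrow> nat \<Rightarrow> bool" where
  "forest_sys D I tv \<phi> N k \<longleftrightarrow> finite D \<and> finite I \<and> 1 \<le> N \<and>
     (\<forall>\<iota>\<in>I. distinct (tv \<iota>) \<and> length (tv \<iota>) = k \<and> set (tv \<iota>) \<subseteq> D \<and> onewise (\<phi> \<iota>) N k) \<and>
     (\<forall>F\<subseteq>I. F \<noteq> {} \<longrightarrow> card F * (k - 1) < card (\<Union>\<iota>\<in>F. set (tv \<iota>)))"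

lemma forest_sys_mono:
  assumes "forest_sys D I tv \<phi> N k" "I' \<subseteq> I" "finite D'" "\<forall>\<iota>\<in>I'. set (tv \<iota>) \<subseteq> D'"
  shows "forest_sys D' I' tv \<phi> N k"
  using assms unfolding forest_sys_def by (auto intro: finite_subset)

lemma GG_indep:
  assumes "\<forall>\<iota>\<in>I. set (tv \<iota>) \<inter> P = {}"
  shows "(\<Prod>\<iota>\<in>I. \<phi> \<iota> (map (mrg P x0 y) (tv \<iota>))) = (\<Prod>\<iota>\<in>I. \<phi> \<iota> (map x0 (tv \<iota>)))"
proof (rule prod.cong[OF refl])
  fix \<iota> assume "\<iota> \<in> I"
  then have "map (mrg P x0 y) (tv \<iota>) = map x0 (tv \<iota>)" using assms by (auto simp: mrg_def)
  then show "\<phi> \<iota> (map (mrg P x0 y) (tv \<iota>)) = \<phi> \<iota> (map x0 (tv \<iota>))" by (rule arg_cong)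
qed

lemma key_lemma:
  fixes \<phi> :: "'j \<Rightarrow> nat list \<Rightarrow> 'a::field_char_0" and tv :: "'j \<Rightarrow> 'd list"
  assumes "forest_sys D I tv \<phi> N k"
  shows "\<forall>u\<in>D. \<forall>h. (\<Sum>x\<in>PiE D (\<lambda>_. {0..<N}). h (x u) * (\<Prod>\<iota>\<in>I. \<phi> \<iota> (map x (tv \<iota>))))
            = of_nat N ^ (card D - 1) * (\<Sum>a<N. h a)"
proof -
  have fI: "finite I" using assms by (simp add: forest_sys_def)
  show ?thesis using fI assms
  proof (induction I rule: finite_psubset_induct)
    case (psubset I)
    note fs = psubset.prems
    have fD: "finite D" and N1: "1 \<le> N" using fs by (auto simp: forest_sys_def)
    show ?case
    proof (cases "I = {}")
      case True
      show ?thesis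
      proof (intro ballI allI)
        fix u and h :: "nat \<Rightarrow> 'a" assume u: "u \<in> D"
        have PD: "D - {u} \<subseteq> D" by auto
        have DD: "D - (D - {u}) = {u}" using u by auto
        have cP: "card (PiE (D - {u}) (\<lambda>_. {0..<N})) = N ^ (card D - 1)"
          using fD u by (simp add: card_PiE)
        have "(\<Sum>x\<in>PiE D (\<lambda>_. {0..<N}). h (x u))
            = (\<Sum>x0\<in>PiE {u} (\<lambda>_. {0..<N}). \<Sum>y\<in>PiE (D - {u}) (\<lambda>_. {0..<N}). h (x0 u))"
          by (subst split_sum[OF PD]) (simp add: DD mrg_out)
        also have "\<dots> = (\<Sum>x0\<in>PiE {u} (\<lambda>_. {0..<N}). of_nat N ^ (card D - 1) * h (x0 u))"
          by (simp add: cP)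
        also have "\<dots> = of_nat N ^ (card D - 1) * (\<Sum>a<N. h a)"
          by (subst sum_PiE_single[where f = "\<lambda>a. of_nat N ^ (card D - 1) * h a"])
             (simp add: sum_distrib_left atLeast0LessThan)
        finally show "(\<Sum>x\<in>PiE D (\<lambda>_. {0..<N}). h (x u) * (\<Prod>\<iota>\<in>I. \<phi> \<iota> (map x (tv \<iota>))))
            = of_nat N ^ (card D - 1) * (\<Sum>a<N. h a)" using True by simp
      qed
    next
      case False
      have dl: "\<forall>\<iota>\<in>I. distinct (tv \<iota>) \<and> length (tv \<iota>) = k" using fs by (simp add: forest_sys_def)
      have forI: "card I * (k - 1) < card (\<Union>\<iota>\<in>I. set (tv \<iota>))" using fs False by (simp add: forest_sys_def)
      obtain t where t: "t \<in> I" and leaf: "card (set (tv t) \<inter> (\<Union>\<iota>\<in>I - {t}. set (tv \<iota>))) \<le> 1"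
        using leaf_exists[OF psubset.hyps(1) dl forI] by blast
      define T where "T = tv t"
      define Oth where "Oth = (\<Union>\<iota>\<in>I - {t}. set (tv \<iota>))"
      define I' where "I' = I - {t}"
      have props: "distinct T" "length T = k" "set T \<subseteq> D" "onewise (\<phi> t) N k"
        using fs t by (auto simp: forest_sys_def T_def)
      have "card {t} * (k - 1) < card (\<Union>\<iota>\<in>{t}. set (tv \<iota>))"
        using fs t unfolding forest_sys_def by blast
      then have k1: "1 \<le> k" using props by (simp add: T_def distinct_card)
      have fs': "forest_sys D I' tv \<phi> N k"
        by (rule forest_sys_mono[OF fs]) (use fs fD in \<open>auto simp: I'_def forest_sys_def\<close>)
      have IH: "\<forall>u\<in>D. \<forall>h. (\<Sum>x\<in>PiE D (\<lambda>_. {0..<N}). h (x u) * (\<Prod>\<iota>\<in>I'. \<phi> \<iota> (map x (tv \<iota>))))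
            = of_nat N ^ (card D - 1) * (\<Sum>a<N. h a)"
        using psubset.IH[of I'] fs' t by (auto simp: I'_def)
      have GI: "(\<Prod>\<iota>\<in>I. \<phi> \<iota> (map x (tv \<iota>))) = \<phi> t (map x T) * (\<Prod>\<iota>\<in>I'. \<phi> \<iota> (map x (tv \<iota>)))" for x
        unfolding I'_def T_def by (rule prod.remove[OF psubset.hyps(1) t])
      have fin: "finite (set T \<inter> Oth)" by simp
      have caseA': "(\<Sum>x\<in>PiE D (\<lambda>_. {0..<N}). h (x u) * (\<Prod>\<iota>\<in>I. \<phi> \<iota> (map x (tv \<iota>))))
            = of_nat N ^ (card D - 1) * (\<Sum>a<N. h a)"
        if u: "u \<in> D" and r: "r \<in> set T" and rO: "(set T - {r}) \<inter> Oth = {}" and ur: "u \<notin> set T - {r}" for u r and h :: "nat \<Rightarrow> 'a"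
      proof -
        obtain m where m: "m < k" "T ! m = r" using r props by (auto simp: in_set_conv_nth)
        define P where "P = set T - {T!m}"
        have Hind: "h (mrg P x0 y u) * (\<Prod>\<iota>\<in>I'. \<phi> \<iota> (map (mrg P x0 y) (tv \<iota>)))
            = h (x0 u) * (\<Prod>\<iota>\<in>I'. \<phi> \<iota> (map x0 (tv \<iota>)))" for x0 y
        proof -
          have "\<forall>\<iota>\<in>I'. set (tv \<iota>) \<inter> P = {}" using rO m by (auto simp: P_def Oth_def I'_def)
          moreover have "mrg P x0 y u = x0 u" using ur m by (simp add: P_def mrg_out)
          ultimately show ?thesis by (simp add: GG_indep)
        qed
        have "(\<Sum>x\<in>PiE D (\<lambda>_. {0..<N}). h (x u) * (\<Prod>\<iota>\<in>I. \<phi> \<iota> (map x (tv \<iota>))))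
           = (\<Sum>x\<in>PiE D (\<lambda>_. {0..<N}). (h (x u) * (\<Prod>\<iota>\<in>I'. \<phi> \<iota> (map x (tv \<iota>)))) * \<phi> t (map x T))"
          by (simp add: GI ac_simps)
        also have "\<dots> = (\<Sum>x\<in>PiE D (\<lambda>_. {0..<N}). h (x u) * (\<Prod>\<iota>\<in>I'. \<phi> \<iota> (map x (tv \<iota>))))"
          by (rule caseA[OF fD P_def props(3,1,2) m(1) props(4)]) (rule Hind)
        also have "\<dots> = of_nat N ^ (card D - 1) * (\<Sum>a<N. h a)" using IH u by blast
        finally show ?thesis .
      qed
      show ?thesis
      proof (intro ballI allI)
        fix u and h :: "nat \<Rightarrow> 'a" assume u: "u \<in> D"
        show "(\<Sum>x\<in>PiE D (\<lambda>_. {0..<N}). h (x u) * (\<Prod>\<iota>\<in>I. \<phi> \<iota> (map x (tv \<iota>))))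
            = of_nat N ^ (card D - 1) * (\<Sum>a<N. h a)"
        proof (cases "set T \<inter> Oth = {}")
          case True
          show ?thesis
          proof (cases "u \<in> set T")
            case True
            then show ?thesis using caseA'[OF u True] \<open>set T \<inter> Oth = {}\<close> by blast
          next
            case False
            have "T ! 0 \<in> set T" using k1 props by simp
            then show ?thesis using caseA'[OF u \<open>T ! 0 \<in> set T\<close>] \<open>set T \<inter> Oth = {}\<close> False by blast
          qed
        next
          case False
          then obtain w where w: "set T \<inter> Oth = {w}"
          proof -
            have "card (set T \<inter> Oth) \<noteq> 0" using False fin by simp
            then have "card (set T \<inter> Oth) = 1" using leaf unfolding T_def Oth_def by linarith
            then show ?thesis using that card_1_singletonE by blast
          qed
          show ?thesis
          proof (cases "u \<in> set T \<and> u \<noteq> w")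
            case False
            have "w \<in> set T" using w by auto
            moreover have "(set T - {w}) \<inter> Oth = {}" using w by auto
            moreover have "u \<notin> set T - {w}" using False by auto
            ultimately show ?thesis using caseA'[OF u] by blast
          next
            case True
            have "w \<in> set T" using w by auto
            then obtain m where m: "m < k" "T ! m = w" using props by (auto simp: in_set_conv_nth)
            obtain mu where mu: "mu < k" "T ! mu = u" using True props by (auto simp: in_set_conv_nth)
            have mum: "mu \<noteq> m" using m mu True by auto
            define P where "P = set T - {T!m}"
            have wD: "w \<in> D" using w props by auto
            have Hind: "(\<Prod>\<iota>\<in>I'. \<phi> \<iota> (map (mrg P x0 y) (tv \<iota>))) = (\<Prod>\<iota>\<in>I'. \<phi> \<iota> (map x0 (tv \<iota>)))" for x0 y
            proof -
              have "\<forall>\<iota>\<in>I'. set (tv \<iota>) \<inter> P = {}" using w m by (auto simp: P_def Oth_def I'_def)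
              then show ?thesis by (rule GG_indep)
            qed
            define psi where "psi c = (\<Sum>v\<in>{v\<in>ZN_vecs N k. v!m = c}. h (v!mu) * \<phi> t v)" for c
            have "of_nat N ^ (k - 1) * (\<Sum>x\<in>PiE D (\<lambda>_. {0..<N}). h (x u) * (\<Prod>\<iota>\<in>I. \<phi> \<iota> (map x (tv \<iota>))))
               = of_nat N ^ (k - 1) * (\<Sum>x\<in>PiE D (\<lambda>_. {0..<N}). h (x (T!mu)) * (\<phi> t (map x T) * (\<Prod>\<iota>\<in>I'. \<phi> \<iota> (map x (tv \<iota>)))))"
              by (simp add: GI mu)
            also have "\<dots> = (\<Sum>x\<in>PiE D (\<lambda>_. {0..<N}). (\<Prod>\<iota>\<in>I'. \<phi> \<iota> (map x (tv \<iota>))) * psi (x (T!m)))"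
              unfolding psi_def
              by (rule caseB[OF fD P_def props(3,1,2) m(1) mu(1) mum]) (rule Hind)
            also have "\<dots> = (\<Sum>x\<in>PiE D (\<lambda>_. {0..<N}). psi (x w) * (\<Prod>\<iota>\<in>I'. \<phi> \<iota> (map x (tv \<iota>))))"
              by (simp add: m mult.commute)
            also have "\<dots> = of_nat N ^ (card D - 1) * (\<Sum>c<N. psi c)" using IH wD by blast
            also have "\<dots> = of_nat N ^ (card D - 1) * (of_nat N ^ (k - 1) * (\<Sum>a<N. h a))"
              unfolding psi_def by (simp add: psi_sum[OF props(4) m(1) mu(1)])
            finally show ?thesis using N1 by (simp add: ac_simps)
          qed
        qed
      qed
    qed
  qed
qed

lemma root_sum_zero:
  assumes b: "0 < b" "b < N"
  shows "(\<Sum>a<N. exp (- (2 * of_real pi * \<i> / of_nat N) * of_nat (b * a))) = (0::complex)"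
proof -
  define \<omega> where "\<omega> = exp (- (2 * of_real pi * \<i> / of_nat N) * of_nat b)"
  have N0: "N > 0" using b by simp
  have e: "exp (- (2 * of_real pi * \<i> / of_nat N) * of_nat (b * a)) = \<omega> ^ a" for a
  proof -
    have "- (2 * of_real pi * \<i> / of_nat N) * of_nat (b * a) = of_nat a * (- (2 * of_real pi * \<i> / of_nat N) * of_nat b)"
      by (simp add: ac_simps)
    then show ?thesis unfolding \<omega>_def by (simp only: exp_of_nat_mult)
  qed
  have wN: "\<omega> ^ N = 1"
  proof -
    have "\<omega> ^ N = exp (of_nat N * (- (2 * of_real pi * \<i> / of_nat N) * of_nat b))"
      unfolding \<omega>_def by (simp only: exp_of_nat_mult)
    also have "of_nat N * (- (2 * of_real pi * \<i> / of_nat N) * of_nat b) = - (2 * of_real pi * \<i> * of_nat b)"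
      using N0 by (simp add: field_simps)
    also have "exp (- (2 * of_real pi * \<i> * of_nat b)) = 1"
      by (simp add: exp_eq_1) (rule exI[of _ "- int b"], simp)
    finally show ?thesis .
  qed
  have w1: "\<omega> \<noteq> 1"
  proof
    assume "\<omega> = 1"
    then obtain n :: int where n: "Im (- (2 * of_real pi * \<i> / of_nat N) * of_nat b) = of_int (2 * n) * pi"
      unfolding \<omega>_def exp_eq_1 by blast
    have "Im (- (2 * of_real pi * \<i> / of_nat N) * of_nat b) = - (2 * pi * real b / real N)"
      by simp
    with n have "- (2 * pi * real b / real N) = 2 * real_of_int n * pi" by simp
    then have "pi * (- real b) = pi * (real_of_int n * real N)" using N0 by (simp add: field_simps)
    then have "- real b = real_of_int n * real N" using pi_gt_zero
      by (metis mult_cancel_left pi_neq_zero)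
    then have "- int b = n * int N" by (metis of_int_eq_iff of_int_minus of_int_mult of_int_of_nat_eq)
    then show False using b
      by (smt (verit, ccfv_threshold) mult_le_cancel_right1 mult_minus_left mult_nonneg_nonneg of_nat_0_le_iff of_nat_less_iff zero_less_imp_eq_int)
  qed
  have "(\<Sum>a<N. exp (- (2 * of_real pi * \<i> / of_nat N) * of_nat (b * a))) = (\<Sum>a<N. \<omega> ^ a)"
    by (rule sum.cong[OF refl]) (rule e)
  also have "\<dots> = 0" using w1 wN by (simp add: sum_gp_strict)
  finally show ?thesis .
qed

lemma vanish:
  fixes \<phi> :: "'j \<Rightarrow> nat list \<Rightarrow> complex" and tv :: "'j \<Rightarrow> 'd list"
  assumes fs: "forest_sys D I tv \<phi> N k" and CD: "C \<subseteq> D"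
    and closed: "\<forall>\<iota>\<in>I. set (tv \<iota>) \<subseteq> C \<or> set (tv \<iota>) \<inter> C = {}"
    and u: "u \<in> C" and bu: "0 < b u" "b u < N" and bz: "\<forall>w\<in>C - {u}. b w = 0"
  shows "(\<Sum>x\<in>PiE D (\<lambda>_. {0..<N}). (\<Prod>\<iota>\<in>I. \<phi> \<iota> (map x (tv \<iota>)))
            * cnj (exp (2 * of_real pi * \<i> / of_nat N * of_nat (\<Sum>v\<in>D. b v * x v)))) = 0"
proof -
  define c where "c = 2 * of_real pi * \<i> / (of_nat N :: complex)"
  define IC where "IC = {\<iota>\<in>I. set (tv \<iota>) \<subseteq> C}"
  have fD: "finite D" and fI: "finite I" using fs by (auto simp: forest_sys_def)
  have fC: "finite C" using CD fD by (rule finite_subset)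
  have ICI: "IC \<subseteq> I" by (auto simp: IC_def)
  have cnjE: "cnj (exp (c * of_nat s)) = exp (- c * of_nat s)" for s
    by (simp add: exp_cnj c_def)
  have fsC: "forest_sys C IC tv \<phi> N k"
    by (rule forest_sys_mono[OF fs ICI fC]) (auto simp: IC_def)
  have key: "(\<Sum>y\<in>PiE C (\<lambda>_. {0..<N}). h (y u) * (\<Prod>\<iota>\<in>IC. \<phi> \<iota> (map y (tv \<iota>))))
            = of_nat N ^ (card C - 1) * (\<Sum>a<N. h a)" for h
    using key_lemma[OF fsC] u by blast
  have sumb: "(\<Sum>v\<in>D. b v * mrg C x0 y v) = (\<Sum>v\<in>D - C. b v * x0 v) + b u * y u" for x0 y
  proof -
    have "(\<Sum>v\<in>D. b v * mrg C x0 y v) = (\<Sum>v\<in>D - C. b v * mrg C x0 y v) + (\<Sum>v\<in>C. b v * mrg C x0 y v)"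
      by (rule sum.subset_diff[OF CD fD])
    also have "(\<Sum>v\<in>D - C. b v * mrg C x0 y v) = (\<Sum>v\<in>D - C. b v * x0 v)"
      by (rule sum.cong) (auto simp: mrg_def)
    also have "(\<Sum>v\<in>C. b v * mrg C x0 y v) = b u * mrg C x0 y u + (\<Sum>v\<in>C - {u}. b v * mrg C x0 y v)"
      by (rule sum.remove[OF fC u])
    also have "(\<Sum>v\<in>C - {u}. b v * mrg C x0 y v) = 0"
      using bz by (intro sum.neutral) auto
    finally show ?thesis using u by (simp add: mrg_def)
  qed
  have GG: "(\<Prod>\<iota>\<in>I. \<phi> \<iota> (map (mrg C x0 y) (tv \<iota>)))
      = (\<Prod>\<iota>\<in>IC. \<phi> \<iota> (map y (tv \<iota>))) * (\<Prod>\<iota>\<in>I - IC. \<phi> \<iota> (map x0 (tv \<iota>)))" for x0 y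
  proof -
    have "(\<Prod>\<iota>\<in>I. \<phi> \<iota> (map (mrg C x0 y) (tv \<iota>)))
        = (\<Prod>\<iota>\<in>I - IC. \<phi> \<iota> (map (mrg C x0 y) (tv \<iota>))) * (\<Prod>\<iota>\<in>IC. \<phi> \<iota> (map (mrg C x0 y) (tv \<iota>)))"
      by (rule prod.subset_diff[OF ICI fI])
    also have "(\<Prod>\<iota>\<in>I - IC. \<phi> \<iota> (map (mrg C x0 y) (tv \<iota>))) = (\<Prod>\<iota>\<in>I - IC. \<phi> \<iota> (map x0 (tv \<iota>)))"
    proof (rule prod.cong[OF refl])
      fix \<iota> assume "\<iota> \<in> I - IC"
      then have "set (tv \<iota>) \<inter> C = {}" using closed by (auto simp: IC_def)
      then have "map (mrg C x0 y) (tv \<iota>) = map x0 (tv \<iota>)" by (auto simp: mrg_def)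
      then show "\<phi> \<iota> (map (mrg C x0 y) (tv \<iota>)) = \<phi> \<iota> (map x0 (tv \<iota>))" by (rule arg_cong)
    qed
    also have "(\<Prod>\<iota>\<in>IC. \<phi> \<iota> (map (mrg C x0 y) (tv \<iota>))) = (\<Prod>\<iota>\<in>IC. \<phi> \<iota> (map y (tv \<iota>)))"
    proof (rule prod.cong[OF refl])
      fix \<iota> assume "\<iota> \<in> IC"
      then have "set (tv \<iota>) \<subseteq> C" by (auto simp: IC_def)
      then have "map (mrg C x0 y) (tv \<iota>) = map y (tv \<iota>)" by (auto simp: mrg_def)
      then show "\<phi> \<iota> (map (mrg C x0 y) (tv \<iota>)) = \<phi> \<iota> (map y (tv \<iota>))" by (rule arg_cong)
    qed
    finally show ?thesis by (simp add: mult.commute)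
  qed
  have "(\<Sum>x\<in>PiE D (\<lambda>_. {0..<N}). (\<Prod>\<iota>\<in>I. \<phi> \<iota> (map x (tv \<iota>)))
            * cnj (exp (2 * of_real pi * \<i> / of_nat N * of_nat (\<Sum>v\<in>D. b v * x v))))
      = (\<Sum>x0\<in>PiE (D - C) (\<lambda>_. {0..<N}). \<Sum>y\<in>PiE C (\<lambda>_. {0..<N}).
          (\<Prod>\<iota>\<in>I. \<phi> \<iota> (map (mrg C x0 y) (tv \<iota>))) * cnj (exp (c * of_nat (\<Sum>v\<in>D. b v * mrg C x0 y v))))"
    unfolding c_def by (rule split_sum[OF CD])
  also have "\<dots> = (\<Sum>x0\<in>PiE (D - C) (\<lambda>_. {0..<N}).
          ((\<Prod>\<iota>\<in>I - IC. \<phi> \<iota> (map x0 (tv \<iota>))) * exp (- c * of_nat (\<Sum>v\<in>D - C. b v * x0 v))) *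
          (\<Sum>y\<in>PiE C (\<lambda>_. {0..<N}). exp (- c * of_nat (b u * y u)) * (\<Prod>\<iota>\<in>IC. \<phi> \<iota> (map y (tv \<iota>)))))"
  proof (rule sum.cong[OF refl])
    fix x0
    show "(\<Sum>y\<in>PiE C (\<lambda>_. {0..<N}).
          (\<Prod>\<iota>\<in>I. \<phi> \<iota> (map (mrg C x0 y) (tv \<iota>))) * cnj (exp (c * of_nat (\<Sum>v\<in>D. b v * mrg C x0 y v))))
        = ((\<Prod>\<iota>\<in>I - IC. \<phi> \<iota> (map x0 (tv \<iota>))) * exp (- c * of_nat (\<Sum>v\<in>D - C. b v * x0 v))) *
          (\<Sum>y\<in>PiE C (\<lambda>_. {0..<N}). exp (- c * of_nat (b u * y u)) * (\<Prod>\<iota>\<in>IC. \<phi> \<iota> (map y (tv \<iota>))))"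
      unfolding sum_distrib_left
    proof (rule sum.cong[OF refl])
      fix y
      have "exp (- c * of_nat (\<Sum>v\<in>D. b v * mrg C x0 y v))
          = exp (- c * of_nat (\<Sum>v\<in>D - C. b v * x0 v)) * exp (- c * of_nat (b u * y u))"
        unfolding sumb by (simp only: of_nat_add distrib_left exp_add)
      then show "(\<Prod>\<iota>\<in>I. \<phi> \<iota> (map (mrg C x0 y) (tv \<iota>))) * cnj (exp (c * of_nat (\<Sum>v\<in>D. b v * mrg C x0 y v)))
        = ((\<Prod>\<iota>\<in>I - IC. \<phi> \<iota> (map x0 (tv \<iota>))) * exp (- c * of_nat (\<Sum>v\<in>D - C. b v * x0 v))) *
          (exp (- c * of_nat (b u * y u)) * (\<Prod>\<iota>\<in>IC. \<phi> \<iota> (map y (tv \<iota>))))"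
        by (simp only: cnjE GG) (simp add: ac_simps)
    qed
  qed
  also have "\<dots> = 0"
    using key[of "\<lambda>a. exp (- c * of_nat (b u * a))"] root_sum_zero[OF bu] by (simp add: c_def)
  finally show ?thesis .
qed

lemma onewise_pmf:
  fixes p :: "nat list pmf"
  assumes sp: "set_pmf p \<subseteq> ZN_vecs N k" and pr: "\<forall>m<k. \<forall>a<N. measure_pmf.prob p {xs. xs ! m = a} = 1 / real N"
    and c: "c \<in> ZN_vecs N k" and N1: "1 \<le> N"
  shows "onewise (\<lambda>v. real N ^ k * pmf p (vsub N v c)) N k"
  unfolding onewise_def
proof (intro allI impI)
  fix m a assume m: "m < k" and a: "a < N"
  have lc: "length c = k" and cN: "\<forall>i<k. c ! i < N" using c by (auto simp: ZN_vecs_def)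
  define a' where "a' = (a + N - c ! m) mod N"
  have a'N: "a' < N" using N1 by (simp add: a'_def)
  have "(\<Sum>v\<in>{v\<in>ZN_vecs N k. v!m = a}. pmf p (vsub N v c)) = (\<Sum>w\<in>{w\<in>ZN_vecs N k. w!m = a'}. pmf p w)"
  proof (rule sum.reindex_bij_witness[where j = "\<lambda>v. vsub N v c" and i = "\<lambda>w. map2 (\<lambda>x y. (x + y) mod N) w c"])
    fix v assume v: "v \<in> {v\<in>ZN_vecs N k. v!m = a}"
    then have lv: "length v = k" and vN: "\<forall>i<k. v ! i < N" by (auto simp: ZN_vecs_def)
    show "map2 (\<lambda>x y. (x + y) mod N) (vsub N v c) c = v"
    proof (rule nth_equalityI)
      fix i assume "i < length (map2 (\<lambda>x y. (x + y) mod N) (vsub N v c) c)"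
      then have i: "i < k" using lv lc by (simp add: vsub_def)
      have "((v ! i + N - c ! i) mod N + c ! i) mod N = (v ! i + N - c ! i + c ! i) mod N"
        by (simp add: mod_add_left_eq)
      also have "v ! i + N - c ! i + c ! i = v ! i + N" using cN i by (metis add.commute le_add_diff_inverse2 less_imp_le trans_le_add1)
      also have "(v ! i + N) mod N = v ! i" using vN i by simp
      finally show "map2 (\<lambda>x y. (x + y) mod N) (vsub N v c) c ! i = v ! i"
        using i lv lc cN by (simp add: vsub_def)
    qed (use lv lc in \<open>simp add: vsub_def\<close>)
    show "vsub N v c \<in> {w\<in>ZN_vecs N k. w!m = a'}"
      using v lv lc cN m N1 by (auto simp: vsub_def ZN_vecs_def a'_def set_conv_nth)
  next
    fix w assume w: "w \<in> {w\<in>ZN_vecs N k. w!m = a'}"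
    then have lw: "length w = k" and wN: "\<forall>i<k. w ! i < N" and wm: "w ! m = a'" by (auto simp: ZN_vecs_def)
    have inv: "((x + y) mod N + N - y) mod N = x" if "x < N" "y < N" for x y
    proof -
      have "((x + y) mod N + N - y) mod N = ((x + y) mod N + (N - y)) mod N" using that by simp
      also have "\<dots> = (x + y + (N - y)) mod N" by (simp add: mod_add_left_eq)
      also have "x + y + (N - y) = x + N" using that by simp
      finally show ?thesis using that by simp
    qed
    show "vsub N (map2 (\<lambda>x y. (x + y) mod N) w c) c = w"
    proof (rule nth_equalityI)
      fix i assume "i < length (vsub N (map2 (\<lambda>x y. (x + y) mod N) w c) c)"
      then have i: "i < k" using lw lc by (simp add: vsub_def)
      show "vsub N (map2 (\<lambda>x y. (x + y) mod N) w c) c ! i = w ! i"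
        using i lw lc cN wN inv by (simp add: vsub_def)
    qed (use lw lc in \<open>simp add: vsub_def\<close>)
    have "(w ! m + c ! m) mod N = a"
    proof -
      have "(w ! m + c ! m) mod N = ((a + N - c ! m) mod N + c ! m) mod N" using wm a'_def by simp
      also have "\<dots> = (a + N - c ! m + c ! m) mod N" by (simp add: mod_add_left_eq)
      also have "a + N - c ! m + c ! m = a + N" using cN m by (metis add.commute le_add_diff_inverse2 less_imp_le trans_le_add1)
      also have "(a + N) mod N = a" using a by simp
      finally show ?thesis .
    qed
    then show "map2 (\<lambda>x y. (x + y) mod N) w c \<in> {v\<in>ZN_vecs N k. v!m = a}"
      using lw lc m N1 by (auto simp: ZN_vecs_def set_conv_nth)
  qed simp
  also have "\<dots> = measure_pmf.prob p {w\<in>ZN_vecs N k. w!m = a'}"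
    by (rule measure_measure_pmf_finite[symmetric]) (use finite_ZN in auto)
  also have "\<dots> = measure_pmf.prob p {w. w!m = a'}"
  proof -
    have "{w\<in>ZN_vecs N k. w!m = a'} \<inter> set_pmf p = {w. w!m = a'} \<inter> set_pmf p" using sp by auto
    then show ?thesis by (metis measure_Int_set_pmf)
  qed
  also have "\<dots> = 1 / real N" using pr m a'N by blast
  finally have s: "(\<Sum>v\<in>{v\<in>ZN_vecs N k. v!m = a}. pmf p (vsub N v c)) = 1 / real N" .
  have "(\<Sum>v\<in>{v\<in>ZN_vecs N k. v!m = a}. real N ^ k * pmf p (vsub N v c)) = real N ^ k * (1 / real N)"
    by (simp add: sum_distrib_left[symmetric] s)
  also have "\<dots> = real N ^ (k - 1)" using m N1
    by (cases k) (auto simp: field_simps)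
  finally show "(\<Sum>v\<in>{v\<in>ZN_vecs N k. v!m = a}. real N ^ k * pmf p (vsub N v c)) = of_nat N ^ (k - 1)" by simp
qed

lemma forest_sys_of_real:
  assumes "forest_sys D I tv (\<phi> :: 'j \<Rightarrow> nat list \<Rightarrow> real) N k"
  shows "forest_sys D I tv (\<lambda>\<iota> v. complex_of_real (\<phi> \<iota> v)) N k"
proof -
  have "onewise (\<lambda>v. complex_of_real (\<phi> \<iota> v)) N k" if "onewise (\<phi> \<iota>) N k" for \<iota>
    using that unfolding onewise_def by (metis of_real_sum of_real_of_nat_eq of_real_power)
  then show ?thesis using assms unfolding forest_sys_def by blast
qed

lemma total_sum:
  fixes \<phi> :: "'j \<Rightarrow> nat list \<Rightarrow> 'a::field_char_0"
  assumes fs: "forest_sys D I tv \<phi> N k"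
  shows "(\<Sum>x\<in>PiE D (\<lambda>_. {0..<N}). \<Prod>\<iota>\<in>I. \<phi> \<iota> (map x (tv \<iota>))) = of_nat N ^ card D"
proof (cases "D = {}")
  case True
  have "I = {}"
  proof (rule ccontr)
    assume "I \<noteq> {}"
    then obtain \<iota> where i: "\<iota> \<in> I" by blast
    then have "set (tv \<iota>) \<subseteq> {}" "length (tv \<iota>) = k" using fs True by (auto simp: forest_sys_def)
    moreover have "card {\<iota>} * (k - 1) < card (\<Union>\<iota>\<in>{\<iota>}. set (tv \<iota>))" using fs i unfolding forest_sys_def by blast
    ultimately show False by simp
  qed
  then show ?thesis using True by simp
next
  case False
  then obtain u where u: "u \<in> D" by blast
  have fD: "finite D" using fs by (simp add: forest_sys_def)
  have "(\<Sum>x\<in>PiE D (\<lambda>_. {0..<N}). (\<lambda>_. 1) (x u) * (\<Prod>\<iota>\<in>I. \<phi> \<iota> (map x (tv \<iota>))))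
      = of_nat N ^ (card D - 1) * (\<Sum>a<N. (\<lambda>_. 1::'a) a)"
    using spec[OF bspec[OF key_lemma[OF fs] u], of "\<lambda>_. 1"] by simp
  moreover have "card D \<ge> 1" using fD u by (metis One_nat_def Suc_leI card_gt_0_iff empty_iff)
  ultimately show ?thesis by (simp add: power_eq_if[of _ "card D"] mult.commute split: if_splits)
qed



lemma finite_prodU: "finite V \<Longrightarrow> set e \<subseteq> V \<Longrightarrow> finite (prodU e n)"
proof -
  assume fV: "finite V" and eV: "set e \<subseteq> V"
  have "prodU e n \<subseteq> {t. set t \<subseteq> V \<times> {1..n} \<and> length t = length e}"
  proof
    fix t assume "t \<in> prodU e n"
    then have lt: "length t = length e" and tn: "\<forall>m<length t. fst (t ! m) = e ! m \<and> snd (t ! m) \<in> {1..n}"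
      by (auto simp: prodU_def)
    have "s \<in> V \<times> {1..n}" if "s \<in> set t" for s
    proof -
      obtain m where m: "m < length t" "s = t ! m" using \<open>s \<in> set t\<close> by (auto simp: in_set_conv_nth)
      then have "fst s = e ! m" "snd s \<in> {1..n}" using tn by auto
      moreover have "e ! m \<in> V" using eV m lt nth_mem by (metis subsetD)
      ultimately show ?thesis by (cases s) auto
    qed
    then show "t \<in> {t. set t \<subseteq> V \<times> {1..n} \<and> length t = length e}" using lt by auto
  qed
  moreover have "finite {t. set t \<subseteq> V \<times> {1..n} \<and> length t = length e}"
    by (rule finite_lists_length_eq) (use fV in simp)
  ultimately show ?thesis by (rule finite_subset)
qed

theorem lemma6p3:
  fixes V :: "'v set" and E :: "'i set" and tup :: "'i \<Rightarrow> 'v list"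
    and k N n K :: nat and \<alpha> :: real and mu :: "'i \<Rightarrow> nat list pmf"
    and z :: "'i \<Rightarrow> nat \<Rightarrow> ('v \<times> nat) list \<Rightarrow> nat list option"
  assumes G: "dlgraph V E tup k N mu"
    and rs: "restriction_seq E tup k N n \<alpha> K z"
    and acyc: "\<not> cyclic E tup k n K z"
  shows "unif_expect V n N (gzeta E tup k N mu n K z) = 1
    \<and> (\<forall>b\<in>assignments V n N.
         fourier V n N (gzeta E tup k N mu n K z) b \<noteq> 0 \<longrightarrow>
           fsupp V n b \<subseteq> \<Union>{C \<in> Hcomponents V E tup n K z. card C \<ge> 2} \<and>
           (\<forall>C\<in>Hcomponents V E tup n K z. card C \<ge> 2 \<longrightarrow> card (fsupp V n b \<inter> C) \<noteq> 1))"
proof -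
  define D where "D = V \<times> {1..n}"
  define Ix where "Ix = (SIGMA i:E. SIGMA j:{1..K}. rsupp (tup i) n (z i j))"
  define tv :: "'i \<times> nat \<times> ('v \<times> nat) list \<Rightarrow> ('v \<times> nat) list" where "tv = (\<lambda>\<iota>. snd (snd \<iota>))"
  define \<phi> where "\<phi> = (\<lambda>\<iota> v. real N ^ k * pmf (mu (fst \<iota>)) (vsub N v (the (z (fst \<iota>) (fst (snd \<iota>)) (snd (snd \<iota>))))))"
  have fV: "finite V" and fE: "finite E" and N2: "N \<ge> 2"
    and Gi: "\<And>i. i \<in> E \<Longrightarrow> length (tup i) = k \<and> distinct (tup i) \<and> set (tup i) \<subseteq> V \<and>
        set_pmf (mu i) \<subseteq> ZN_vecs N k \<and>
        (\<forall>m<k. \<forall>a<N. measure_pmf.prob (mu i) {xs. xs ! m = a} = 1 / real N)"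
    using G unfolding dlgraph_def by auto
  have fD: "finite D" using fV by (simp add: D_def)
  have frs: "finite (rsupp (tup i) n (z i j))" if "i \<in> E" for i j
    using finite_prodU[OF fV] Gi[OF that] unfolding rsupp_def by (auto intro: finite_subset)
  have fIx: "finite Ix" unfolding Ix_def using fE frs by (auto intro!: finite_SigmaI)
  have gz: "gzeta E tup k N mu n K z x = (\<Prod>\<iota>\<in>Ix. \<phi> \<iota> (map x (tv \<iota>)))" for x
  proof -
    have "gzeta E tup k N mu n K z x = (\<Prod>i\<in>E. \<Prod>p\<in>(SIGMA j:{1..K}. rsupp (tup i) n (z i j)).
        real N ^ k * pmf (mu i) (vsub N (map x (snd p)) (the (z i (fst p) (snd p)))))"
      unfolding gzeta_def by (rule prod.cong[OF refl], subst prod.Sigma) (auto simp: frs split_def)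
    also have "\<dots> = (\<Prod>\<iota>\<in>Ix. \<phi> \<iota> (map x (tv \<iota>)))"
      unfolding Ix_def by (subst prod.Sigma) (auto simp: frs fE \<phi>_def tv_def split_def intro!: finite_SigmaI)
    finally show ?thesis .
  qed
  have inIx: "t \<in> prodU (tup i) n \<and> the (z i j t) \<in> ZN_vecs N k \<and> i \<in> E \<and> j \<in> {1..K}" if "(i, j, t) \<in> Ix" for i j t
    using that rs unfolding Ix_def restriction_seq_def rsupp_def by auto
  have ac1: "\<not> (\<exists>i\<in>E. \<exists>j\<in>{1..K}. \<exists>i'\<in>E. \<exists>j'\<in>{1..K}. (i, j) \<noteq> (i', j') \<and>
         rsupp (tup i) n (z i j) \<inter> rsupp (tup i') n (z i' j') \<noteq> {})"
    using acyc unfolding cyclic_def by blast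
  have ac2: "\<not> (\<exists>F \<subseteq> Hedges E tup n K z. F \<noteq> {} \<and> finite F \<and> card (\<Union>t\<in>F. set t) \<le> card F * (k - 1))"
    using acyc unfolding cyclic_def de_Morgan_disj by (elim conjE)
  have inj: "inj_on tv Ix"
  proof (rule inj_onI)
    fix a b assume a: "a \<in> Ix" and b: "b \<in> Ix" and e: "tv a = tv b"
    obtain i j t where ae: "a = (i, j, t)" by (cases a) auto
    obtain i' j' t' where be: "b = (i', j', t')" by (cases b) auto
    have "t = t'" using e ae be by (simp add: tv_def)
    have "t \<in> rsupp (tup i) n (z i j) \<inter> rsupp (tup i') n (z i' j')"
      using a b ae be \<open>t = t'\<close> by (auto simp: Ix_def)
    moreover have "i \<in> E" "j \<in> {1..K}" "i' \<in> E" "j' \<in> {1..K}" using a b ae be by (auto simp: Ix_def)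
    ultimately have "(i, j) = (i', j')" using ac1 by blast
    then show "a = b" using ae be \<open>t = t'\<close> by simp
  qed
  have fs: "forest_sys D Ix tv \<phi> N k"
    unfolding forest_sys_def
  proof (intro conjI ballI allI impI)
    show "finite D" "finite Ix" "1 \<le> N" using fD fIx N2 by auto
  next
    fix \<iota> assume i: "\<iota> \<in> Ix"
    obtain i j t where ie: "\<iota> = (i, j, t)" by (cases \<iota>) auto
    have tP: "t \<in> prodU (tup i) n" and c: "the (z i j t) \<in> ZN_vecs N k" and iE: "i \<in> E"
      using inIx i ie by auto
    have lt: "length t = k" and tn: "\<forall>m<length t. fst (t ! m) = tup i ! m \<and> snd (t ! m) \<in> {1..n}"
      using tP Gi[OF iE] by (auto simp: prodU_def)
    show "distinct (tv \<iota>)"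
      unfolding ie tv_def distinct_conv_nth
    proof (intro allI impI)
      fix a b assume "a < length (snd (snd (i, j, t)))" "b < length (snd (snd (i, j, t)))" "a \<noteq> b"
      then show "snd (snd (i, j, t)) ! a \<noteq> snd (snd (i, j, t)) ! b"
        using tn Gi[OF iE] lt by (auto simp: nth_eq_iff_index_eq) (metis nth_eq_iff_index_eq)
    qed
    show "length (tv \<iota>) = k" using lt ie tv_def by simp
    show "set (tv \<iota>) \<subseteq> D"
    proof
      fix s assume "s \<in> set (tv \<iota>)"
      then obtain m where m: "m < length t" "s = t ! m" using ie tv_def by (auto simp: in_set_conv_nth)
      then have "fst s \<in> V" using tn Gi[OF iE] lt by (metis nth_mem subsetD)
      then show "s \<in> D" using tn m by (auto simp: D_def mem_Times_iff)
    qed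
    show "onewise (\<phi> \<iota>) N k"
      unfolding \<phi>_def ie using onewise_pmf[of "mu i" N k "the (z i j t)"] Gi[OF iE] c N2 by simp
  next
    fix F assume F: "F \<subseteq> Ix" "F \<noteq> {}"
    have "tv ` F \<subseteq> Hedges E tup n K z"
      using F unfolding Hedges_def Ix_def tv_def by force
    moreover have "tv ` F \<noteq> {}" "finite (tv ` F)" using F fIx finite_subset by auto
    ultimately have "\<not> card (\<Union>t\<in>tv ` F. set t) \<le> card (tv ` F) * (k - 1)"
    proof (intro notI)
      assume h: "tv ` F \<subseteq> Hedges E tup n K z" "tv ` F \<noteq> {}" "finite (tv ` F)"
        and c: "card (\<Union>t\<in>tv ` F. set t) \<le> card (tv ` F) * (k - 1)"
      have "\<exists>F' \<subseteq> Hedges E tup n K z. F' \<noteq> {} \<and> finite F' \<and> card (\<Union>t\<in>F'. set t) \<le> card F' * (k - 1)"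
        apply (rule exI[of _ "tv ` F"])
        apply (intro conjI h c)
        done
      with ac2 show False by (rule notE)
    qed
    moreover have "card (tv ` F) = card F" using inj F by (meson card_image inj_on_subset)
    ultimately show "card F * (k - 1) < card (\<Union>\<iota>\<in>F. set (tv \<iota>))" by simp
  qed
  have cardA: "card (assignments V n N) = N ^ card D"
    unfolding assignments_def D_def[symmetric] by (simp add: card_PiE[OF fD])
  have part1: "unif_expect V n N (gzeta E tup k N mu n K z) = 1"
  proof -
    have A: "assignments V n N = PiE D (\<lambda>_. {0..<N})" by (simp add: assignments_def D_def)
    have "(\<Sum>x\<in>assignments V n N. gzeta E tup k N mu n K z x) = real N ^ card D"
      unfolding gz A by (rule total_sum[OF fs])
    then show ?thesis unfolding unif_expect_def cardA using N2 by simp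
  qed
  have A: "assignments V n N = PiE D (\<lambda>_. {0..<N})" by (simp add: assignments_def D_def)
  have fsC: "forest_sys D Ix tv (\<lambda>\<iota> v. complex_of_real (\<phi> \<iota> v)) N k"
    by (rule forest_sys_of_real[OF fs])
  have van: "fourier V n N (gzeta E tup k N mu n K z) b = 0"
    if b: "b \<in> assignments V n N" and CD: "C \<subseteq> D"
      and closed: "\<forall>\<iota>\<in>Ix. set (tv \<iota>) \<subseteq> C \<or> set (tv \<iota>) \<inter> C = {}"
      and u: "u \<in> C" "b u \<noteq> 0" and bz: "\<forall>w\<in>C - {u}. b w = 0" for b C u
  proof -
    have "u \<in> D" using u CD by auto
    then have buN: "b u < N" using b unfolding A by (auto simp: PiE_iff)
    have "(\<Sum>x\<in>PiE D (\<lambda>_. {0..<N}). (\<Prod>\<iota>\<in>Ix. complex_of_real (\<phi> \<iota> (map x (tv \<iota>))))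
            * cnj (exp (2 * of_real pi * \<i> / of_nat N * of_nat (\<Sum>v\<in>D. b v * x v)))) = 0"
      by (rule vanish[OF fsC CD closed u(1)]) (use u buN bz in auto)
    then show ?thesis
      unfolding fourier_def unif_expect_def character_def A gz D_def[symmetric]
      by (simp add: of_real_prod)
  qed
  define R where "R = Hadj E tup n K z"
  have closed: "\<forall>\<iota>\<in>Ix. set (tv \<iota>) \<subseteq> C \<or> set (tv \<iota>) \<inter> C = {}"
    if C: "C = {w\<in>D. (u0, w) \<in> R\<^sup>*}" for C u0
  proof
    fix \<iota> assume i: "\<iota> \<in> Ix"
    have sD: "set (tv \<iota>) \<subseteq> D" using fs i unfolding forest_sys_def by blast
    have tH: "tv \<iota> \<in> Hedges E tup n K z"
      using i unfolding Ix_def Hedges_def tv_def by (cases \<iota>) force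
    show "set (tv \<iota>) \<subseteq> C \<or> set (tv \<iota>) \<inter> C = {}"
    proof (cases "set (tv \<iota>) \<inter> C = {}")
      case False
      then obtain s where s: "s \<in> set (tv \<iota>)" "s \<in> C" by blast
      have "s' \<in> C" if s': "s' \<in> set (tv \<iota>)" for s'
      proof -
        have "(s, s') \<in> R" unfolding R_def Hadj_def using tH s s' by blast
        moreover have "(u0, s) \<in> R\<^sup>*" using s C by blast
        ultimately have "(u0, s') \<in> R\<^sup>*" by (blast intro: rtrancl_into_rtrancl)
        then show ?thesis using C sD s' by blast
      qed
      then show ?thesis by blast
    qed simp
  qed
  show ?thesis
  proof (intro conjI part1 ballI impI)
    fix b assume b: "b \<in> assignments V n N" and nz: "fourier V n N (gzeta E tup k N mu n K z) b \<noteq> 0"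
    show "fsupp V n b \<subseteq> \<Union>{C \<in> Hcomponents V E tup n K z. card C \<ge> 2}"
    proof
      fix u assume u: "u \<in> fsupp V n b"
      then have uD: "u \<in> D" and bu: "b u \<noteq> 0" by (auto simp: fsupp_def D_def)
      define Cu where "Cu = {w\<in>D. (u, w) \<in> R\<^sup>*}"
      have CuH: "Cu \<in> Hcomponents V E tup n K z"
        using uD unfolding Cu_def Hcomponents_def D_def R_def by blast
      have uC: "u \<in> Cu" using uD by (simp add: Cu_def)
      show "u \<in> \<Union>{C \<in> Hcomponents V E tup n K z. card C \<ge> 2}"
      proof (cases "2 \<le> card Cu")
        case True then show ?thesis using CuH uC by blast
      next
        case False
        have fCu: "finite Cu" using fD by (simp add: Cu_def)
        have bz: "\<forall>w\<in>Cu - {u}. b w = 0"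
        proof
          fix w assume w: "w \<in> Cu - {u}"
          then have "card {u, w} \<le> card Cu" using uC fCu by (intro card_mono) auto
          then show "b w = 0" using False w by auto
        qed
        have "Cu \<subseteq> D" by (auto simp: Cu_def)
        then have "fourier V n N (gzeta E tup k N mu n K z) b = 0"
          by (rule van[OF b _ closed[OF Cu_def] uC bu bz])
        with nz show ?thesis by contradiction
      qed
    qed
    fix C assume CH: "C \<in> Hcomponents V E tup n K z" and c2: "card C \<ge> 2"
    show "card (fsupp V n b \<inter> C) \<noteq> 1"
    proof
      assume c1: "card (fsupp V n b \<inter> C) = 1"
      obtain u0 where C: "C = {w\<in>D. (u0, w) \<in> R\<^sup>*}"
        using CH unfolding Hcomponents_def D_def R_def by blast
      obtain u where u: "fsupp V n b \<inter> C = {u}" using c1 card_1_singletonE by blast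
      then have uC: "u \<in> C" and bu: "b u \<noteq> 0" by (auto simp: fsupp_def)
      have bz: "\<forall>w\<in>C - {u}. b w = 0" using u C by (auto simp: fsupp_def D_def)
      have "C \<subseteq> D" using C by auto
      then have "fourier V n N (gzeta E tup k N mu n K z) b = 0"
        by (rule van[OF b _ closed[OF C] uC bu bz])
      with nz show False by contradiction
    qed
  qed
qed

end
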